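(* Let $(\Gamma,d)=(H,\iota,\sigma,m,d)$ be a $\mathbb{Z}/2\mathbb{Z}$-graded skew Brauer graph and $H'\subseteq H$ stable under $\iota$. Let $\Gamma_d=(H_d,\iota_d,\sigma_d,m_d)$ be the covering of $(\Gamma,d)$ and $H'_d=H'\times\mathbb{Z}/2\mathbb{Z}\subseteq H_d$. Then the covering of the graded skew Brauer graph $\mu^+_{H'}(\Gamma,d)$ is the Brauer graph $\mu^+_{H'_d}(\Gamma_d)$.
   Context: A skew Brauer graph is $\Gamma=(H,\iota,\sigma,m)$ with $H$ finite, $\iota$ an involution (possibly with fixed points; $H_\times$ = fixed points, $H_\circ$ = the rest), $\sigma$ a permutation, $m:H\to\mathbb{Z}_{>0}$ constant on $\sigma$-orbits; no half-edge is fixed by both $\iota$ and $\sigma$. A Brauer graph is a skew Brauer graph with $H_\times=\varnothing$. A grading $d:H\to\mathbb{Z}/2\mathbb{Z}$ is $0$-homogeneous if its sum over each $\sigma$-orbit is $0$; then $(\Gamma,d)$ is a graded skew Brauer graph. Its covering is the Brauer graph $\Gamma_d$ with $H_d=H\times\mathbb{Z}/2\mathbb{Z}$ (elements $h_i$), $\iota_d(h_i)=h_{i+1}$ if $h\in H_\times$ and $(\iota h)_i$ if $h\in H_\circ$, $\sigma_d(h_i)=(\sigma h)_{i+d(h)}$, $m_d(h_i)=m(h)$. Sectors and moves: for $H'$ stable under $\iota$, $(h,r)\in H\times\mathbb{Z}_{\ge0}$ is a sector of elements of $H'$ if $r+1$ is the least $r'\ge0$ with $\sigma^{r'}h\notin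 H'$, maximal if moreover $\sigma^{-1}h\notin H'$. The move of a sector gives $\sigma_{(h,r)}=(h\ \ \sigma^{r+1}h)\circ\sigma\circ(\sigma^rh\ \ \iota\sigma^{r+1}h)$ (applied right to left), $m_{(h,r)}(\sigma^ih)=m(\iota\sigma^{r+1}h)$ for $0\le i\le r$, $m_{(h,r)}=m$ elsewhere; in the graded version also $d_{(h,r)}$, defined with $\epsilon=0$ if $\sigma^{r+1}h\in H_\circ$, $\epsilon=1$ if $\sigma^{r+1}h\in H_\times$: $d_{(h,r)}(\iota\sigma^{r+1}h)=-\sum_{i=0}^rd(\sigma^ih)-\epsilon$; $d_{(h,r)}(\sigma^rh)=d(\iota\sigma^{r+1}h)+d(\sigma^rh)+\epsilon$ if $\iota\sigma^{r+1}h\neq\sigma^{-1}h$, else $\sum_{i=-1}^rd(\sigma^ih)+d(\sigma^rh)+\epsilon$; $d_{(h,r)}(\sigma^{-1}h)=\sum_{i=-1}^rd(\sigma^ih)$ if $\iota\sigma^{r+1}h\ne\sigma^{-1}h$, else $d_{(h,r)}(\iota\sigma^{r+1}h)$; $d_{(h,r)}=d$ elsewhere. The (graded) generalized Kauer move $\mu^+_{H'}$ applies successively the (graded) moves of all maximal sectors of elements of $H'$ (independent of order). The covering of $\mu^+_{H'}(\Gamma,d)$ is formed with respect to its grading $d_{H'}$. *)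

theory Defs
  imports Main "HOL-Library.Z2" "HOL-Combinatorics.Permutations" "HOL-Combinatorics.Transposition"
begin

definition skew_brauer_graph ::
  "'h set \<Rightarrow> ('h \<Rightarrow> 'h) \<Rightarrow> ('h \<Rightarrow> 'h) \<Rightarrow> ('h \<Rightarrow> nat) \<Rightarrow> bool" where
  "skew_brauer_graph H \<iota> \<sigma> m \<longleftrightarrow>
     finite H \<and> \<iota> permutes H \<and> (\<forall>h\<in>H. \<iota> (\<iota> h) = h) \<and> \<sigma> permutes H \<and>
     (\<forall>h\<in>H. m h > 0) \<and> (\<forall>h\<in>H. m (\<sigma> h) = m h) \<and>
     (\<forall>h\<in>H. \<not> (\<iota> h = h \<and> \<sigma> h = h))"

definition H_times :: "'h set \<Rightarrow> ('h \<Rightarrow> 'h) \<Rightarrow> 'h set" where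
  "H_times H \<iota> = {h \<in> H. \<iota> h = h}"

definition H_circ :: "'h set \<Rightarrow> ('h \<Rightarrow> 'h) \<Rightarrow> 'h set" where
  "H_circ H \<iota> = {h \<in> H. \<iota> h \<noteq> h}"

definition brauer_graph ::
  "'h set \<Rightarrow> ('h \<Rightarrow> 'h) \<Rightarrow> ('h \<Rightarrow> 'h) \<Rightarrow> ('h \<Rightarrow> nat) \<Rightarrow> bool" where
  "brauer_graph H \<iota> \<sigma> m \<longleftrightarrow> skew_brauer_graph H \<iota> \<sigma> m \<and> H_times H \<iota> = {}"

definition sigma_orbit :: "('h \<Rightarrow> 'h) \<Rightarrow> 'h \<Rightarrow> 'h set" where
  "sigma_orbit \<sigma> h = {(\<sigma> ^^ n) h | n. True}"

definition zero_homogeneous :: "'h set \<Rightarrow> ('h \<Rightarrow> 'h) \<Rightarrow> ('h \<Rightarrow> bit) \<Rightarrow> bool" where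
  "zero_homogeneous H \<sigma> d \<longleftrightarrow> (\<forall>h\<in>H. (\<Sum>x\<in>sigma_orbit \<sigma> h. d x) = 0)"

definition graded_skew_brauer_graph ::
  "'h set \<Rightarrow> ('h \<Rightarrow> 'h) \<Rightarrow> ('h \<Rightarrow> 'h) \<Rightarrow> ('h \<Rightarrow> nat) \<Rightarrow> ('h \<Rightarrow> bit) \<Rightarrow> bool" where
  "graded_skew_brauer_graph H \<iota> \<sigma> m d \<longleftrightarrow>
     skew_brauer_graph H \<iota> \<sigma> m \<and> zero_homogeneous H \<sigma> d"

definition cov_H :: "'h set \<Rightarrow> ('h \<times> bit) set" where
  "cov_H H = H \<times> (UNIV :: bit set)"

definition cov_iota :: "'h set \<Rightarrow> ('h \<Rightarrow> 'h) \<Rightarrow> ('h \<times> bit \<Rightarrow> 'h \<times> bit)" where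
  "cov_iota H \<iota> = (\<lambda>(h, i). if h \<in> H_times H \<iota> then (h, i + 1) else (\<iota> h, i))"

definition cov_sigma :: "'h set \<Rightarrow> ('h \<Rightarrow> 'h) \<Rightarrow> ('h \<Rightarrow> bit) \<Rightarrow> ('h \<times> bit \<Rightarrow> 'h \<times> bit)" where
  "cov_sigma H \<sigma> d = (\<lambda>(h, i). (\<sigma> h, if h \<in> H then i + d h else i))"

definition cov_m :: "('h \<Rightarrow> nat) \<Rightarrow> ('h \<times> bit \<Rightarrow> nat)" where
  "cov_m m = (\<lambda>(h, i). m h)"

definition is_sector :: "'h set \<Rightarrow> ('h \<Rightarrow> 'h) \<Rightarrow> 'h \<Rightarrow> nat \<Rightarrow> bool" where
  "is_sector H' \<sigma> h r \<longleftrightarrow>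
     (\<forall>i\<le>r. (\<sigma> ^^ i) h \<in> H') \<and> (\<sigma> ^^ Suc r) h \<notin> H'"

definition is_max_sector :: "'h set \<Rightarrow> ('h \<Rightarrow> 'h) \<Rightarrow> 'h \<Rightarrow> nat \<Rightarrow> bool" where
  "is_max_sector H' \<sigma> h r \<longleftrightarrow> is_sector H' \<sigma> h r \<and> inv \<sigma> h \<notin> H'"

definition max_sectors :: "'h set \<Rightarrow> ('h \<Rightarrow> 'h) \<Rightarrow> ('h \<times> nat) set" where
  "max_sectors H' \<sigma> = {(h, r). is_max_sector H' \<sigma> h r}"

definition move_sigma :: "('h \<Rightarrow> 'h) \<Rightarrow> ('h \<Rightarrow> 'h) \<Rightarrow> 'h \<Rightarrow> nat \<Rightarrow> ('h \<Rightarrow> 'h)" where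
  "move_sigma \<iota> \<sigma> h r =
     transpose h ((\<sigma> ^^ Suc r) h) \<circ> \<sigma> \<circ> transpose ((\<sigma> ^^ r) h) (\<iota> ((\<sigma> ^^ Suc r) h))"

definition move_m :: "('h \<Rightarrow> 'h) \<Rightarrow> ('h \<Rightarrow> 'h) \<Rightarrow> ('h \<Rightarrow> nat) \<Rightarrow> 'h \<Rightarrow> nat \<Rightarrow> ('h \<Rightarrow> nat)" where
  "move_m \<iota> \<sigma> m h r =
     (\<lambda>x. if \<exists>i\<le>r. x = (\<sigma> ^^ i) h then m (\<iota> ((\<sigma> ^^ Suc r) h)) else m x)"

definition move_d ::
  "'h set \<Rightarrow> ('h \<Rightarrow> 'h) \<Rightarrow> ('h \<Rightarrow> 'h) \<Rightarrow> ('h \<Rightarrow> bit) \<Rightarrow> 'h \<Rightarrow> nat \<Rightarrow> ('h \<Rightarrow> bit)" where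
  "move_d H \<iota> \<sigma> d h r =
     (let s = (\<sigma> ^^ Suc r) h;
          \<epsilon> = (if s \<in> H_times H \<iota> then (1::bit) else 0);
          p = inv \<sigma> h;
          S = (\<Sum>i\<le>r. d ((\<sigma> ^^ i) h));
          dI = - S - \<epsilon>
      in (\<lambda>x. if x = \<iota> s then dI
              else if x = (\<sigma> ^^ r) h then
                (if \<iota> s \<noteq> p then d (\<iota> s) + d ((\<sigma> ^^ r) h) + \<epsilon>
                 else (d p + S) + d ((\<sigma> ^^ r) h) + \<epsilon>)
              else if x = p then
                (if \<iota> s \<noteq> p then d p + S else dI)
              else d x))"

definition move :: "('h \<Rightarrow> 'h) \<Rightarrow> 'h \<times> nat \<Rightarrow> ('h \<Rightarrow> 'h) \<times> ('h \<Rightarrow> nat)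
                      \<Rightarrow> ('h \<Rightarrow> 'h) \<times> ('h \<Rightarrow> nat)" where
  "move \<iota> s st = (case s of (h, r) \<Rightarrow> case st of (\<sigma>, m) \<Rightarrow>
      (move_sigma \<iota> \<sigma> h r, move_m \<iota> \<sigma> m h r))"

definition graded_move :: "'h set \<Rightarrow> ('h \<Rightarrow> 'h) \<Rightarrow> 'h \<times> nat
     \<Rightarrow> ('h \<Rightarrow> 'h) \<times> ('h \<Rightarrow> nat) \<times> ('h \<Rightarrow> bit)
     \<Rightarrow> ('h \<Rightarrow> 'h) \<times> ('h \<Rightarrow> nat) \<times> ('h \<Rightarrow> bit)" where
  "graded_move H \<iota> s st = (case s of (h, r) \<Rightarrow> case st of (\<sigma>, m, d) \<Rightarrow>
      (move_sigma \<iota> \<sigma> h r, move_m \<iota> \<sigma> m h r, move_d H \<iota> \<sigma> d h r))"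

text \<open>Generalized Kauer move: apply successively the moves of all maximal sectors
 of elements of H' (of the original graph), in some enumeration order (the paper
 asserts the result is independent of the order).\<close>
definition kauer_move :: "'h set \<Rightarrow> ('h \<Rightarrow> 'h) \<Rightarrow> ('h \<Rightarrow> 'h) \<Rightarrow> ('h \<Rightarrow> nat)
     \<Rightarrow> ('h \<Rightarrow> 'h) \<times> ('h \<Rightarrow> nat)" where
  "kauer_move H' \<iota> \<sigma> m =
     (let L = (SOME L. distinct L \<and> set L = max_sectors H' \<sigma>)
      in fold (move \<iota>) L (\<sigma>, m))"

definition graded_kauer_move :: "'h set \<Rightarrow> 'h set \<Rightarrow> ('h \<Rightarrow> 'h) \<Rightarrow> ('h \<Rightarrow> 'h)
     \<Rightarrow> ('h \<Rightarrow> nat) \<Rightarrow> ('h \<Rightarrow> bit) \<Rightarrow> ('h \<Rightarrow> 'h) \<times> ('h \<Rightarrow> nat) \<times> ('h \<Rightarrow> bit)" where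
  "graded_kauer_move H H' \<iota> \<sigma> m d =
     (let L = (SOME L. distinct L \<and> set L = max_sectors H' \<sigma>)
      in fold (graded_move H \<iota>) L (\<sigma>, m, d))"

end

theory Submission
  imports Defs
begin

declare add_bit_eq_xor[simp del] mult_bit_eq_and[simp del]

lemma bit_add_self[simp]: "(x::bit) + x = 0"
  using bit_not_zero_iff[of x] by auto

lemma bit_UNIV: "(UNIV::bit set) = {0,1}" using bit_not_zero_iff by blast

locale kset =
  fixes Hp :: "'a set" and io :: "'a \<Rightarrow> 'a" and sg :: "'a \<Rightarrow> 'a"
  assumes bij_sg: "bij sg" and inj_io: "inj io" and io_Hp: "\<And>x. io x \<in> Hp \<longleftrightarrow> x \<in> Hp"
    and fin_Hp: "finite Hp"
begin

abbreviation "MS \<equiv> max_sectors Hp sg"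
definition aa where "aa k = (sg ^^ snd k) (fst k)"
definition cc where "cc k = (sg ^^ Suc (snd k)) (fst k)"
definition bb where "bb k = io (cc k)"
definition pp where "pp k = inv sg (fst k)"
definition run where "run k = {(sg ^^ i) (fst k) | i. i \<le> snd k}"

lemma MS_iff: "k \<in> MS \<longleftrightarrow> (\<forall>i\<le>snd k. (sg^^i) (fst k) \<in> Hp) \<and> (sg ^^ Suc (snd k)) (fst k) \<notin> Hp \<and> inv sg (fst k) \<notin> Hp"
  by (cases k) (simp add: max_sectors_def is_max_sector_def is_sector_def)

lemma inj_sg: "inj sg" using bij_sg bij_def by auto
lemma sg_inv[simp]: "sg (inv sg x) = x" using bij_sg by (simp add: bij_is_surj surj_f_inv_f)
lemma inv_sg[simp]: "inv sg (sg x) = x" using inj_sg by simp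

lemma uniq_aux:
  assumes k: "k \<in> MS" and k': "k' \<in> MS" and i: "i \<le> snd k" and i': "i' \<le> snd k'" and le: "i \<le> i'"
    and eq: "(sg ^^ i) (fst k) = (sg ^^ i') (fst k')"
  shows "k = k' \<and> i = i'"
proof -
  have "(sg ^^ i) (fst k) = (sg ^^ i) ((sg ^^ (i' - i)) (fst k'))"
    using eq le by (metis funpow_add le_add_diff_inverse comp_apply)
  hence h: "fst k = (sg ^^ (i' - i)) (fst k')" using inj_fn[OF inj_sg, of i] by (meson injD)
  have ii: "i = i'"
  proof (rule ccontr)
    assume "i \<noteq> i'"
    then obtain n where n: "i' - i = Suc n" using le by (cases "i' - i") auto
    hence "fst k = sg ((sg ^^ n) (fst k'))" using h by simp
    hence "inv sg (fst k) = (sg ^^ n) (fst k')" by simp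
    moreover have "n \<le> snd k'" using n i' by linarith
    ultimately have "inv sg (fst k) \<in> Hp" using k' MS_iff by auto
    thus False using k MS_iff by auto
  qed
  hence f: "fst k = fst k'" using h by simp
  have "snd k = snd k'"
  proof (rule ccontr)
    assume "snd k \<noteq> snd k'"
    then consider "snd k < snd k'" | "snd k' < snd k" by linarith
    thus False
    proof cases
      case 1 then show False using k k' f MS_iff[of k] MS_iff[of k'] by (metis Suc_leI)
    next
      case 2 then show False using k k' f MS_iff[of k] MS_iff[of k'] by (metis Suc_leI)
    qed
  qed
  thus ?thesis using f ii by (simp add: prod_eq_iff)
qed

lemma uniq:
  assumes "k \<in> MS" "k' \<in> MS" "i \<le> snd k" "i' \<le> snd k'"
    and "(sg ^^ i) (fst k) = (sg ^^ i') (fst k')"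
  shows "k = k' \<and> i = i'"
  using uniq_aux[OF assms(1-4)] uniq_aux[OF assms(2,1,4,3)] assms(5) by (metis nat_le_linear)

lemma MS_run: "k \<in> MS \<Longrightarrow> i \<le> snd k \<Longrightarrow> (sg^^i) (fst k) \<in> Hp" using MS_iff by auto
lemma MS_fst: "k \<in> MS \<Longrightarrow> fst k \<in> Hp" using MS_run[of k 0] by simp
lemma aa_Hp: "k \<in> MS \<Longrightarrow> aa k \<in> Hp" using MS_run by (simp add: aa_def)
lemma cc_Hp: "k \<in> MS \<Longrightarrow> cc k \<notin> Hp" using MS_iff by (simp add: cc_def)
lemma bb_Hp: "k \<in> MS \<Longrightarrow> bb k \<notin> Hp" using cc_Hp io_Hp by (simp add: bb_def)
lemma pp_Hp: "k \<in> MS \<Longrightarrow> pp k \<notin> Hp" using MS_iff by (simp add: pp_def)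
lemma sg_aa[simp]: "sg (aa k) = cc k" by (simp add: aa_def cc_def)
lemma sg_pp[simp]: "sg (pp k) = fst k" by (simp add: pp_def)
lemma run_Hp: "k \<in> MS \<Longrightarrow> x \<in> run k \<Longrightarrow> x \<in> Hp" unfolding run_def using MS_run by blast

lemma inj_aa: "inj_on aa MS"
proof (rule inj_onI)
  fix k k' assume "k \<in> MS" "k' \<in> MS" "aa k = aa k'"
  then show "k = k'" using uniq[of k k' "snd k" "snd k'"] by (simp add: aa_def)
qed
lemma inj_fst: "inj_on fst MS"
proof (rule inj_onI)
  fix k k' assume "k \<in> MS" "k' \<in> MS" "fst k = fst k'"
  then show "k = k'" using uniq[of k k' 0 0] by simp
qed
lemma inj_cc: "inj_on cc MS"
  by (rule inj_onI) (metis inj_aa inj_onD inj_sg injD sg_aa)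
lemma inj_bb: "inj_on bb MS"
  by (rule inj_onI) (metis bb_def inj_cc inj_onD inj_io injD)
lemma inj_pp: "inj_on pp MS"
  by (rule inj_onI) (metis inj_fst inj_onD sg_pp)

lemma fin_MS: "finite MS"
proof -
  have "fst ` MS \<subseteq> Hp" using MS_fst by auto
  hence "finite (fst ` MS)" using fin_Hp finite_subset by blast
  thus ?thesis using inj_fst finite_image_iff by blast
qed

lemma run_aa: "k \<in> MS \<Longrightarrow> j \<in> MS \<Longrightarrow> i \<le> snd k \<Longrightarrow> (sg^^i) (fst k) = aa j \<Longrightarrow> j = k \<and> i = snd k"
  using uniq[of k j i "snd j"] by (auto simp: aa_def)

lemma run_disj: "k \<in> MS \<Longrightarrow> j \<in> MS \<Longrightarrow> x \<in> run k \<Longrightarrow> x \<in> run j \<Longrightarrow> j = k"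
  unfolding run_def using uniq by blast


definition gT where "gT T y = (if y \<in> pp ` T then cc (inv_into T pp y) else sg y)"
definition sT where "sT T x = (if x \<in> bb ` T then fst (inv_into T bb x)
   else if x \<in> aa ` T then gT T (bb (inv_into T aa x))
   else if x \<in> pp ` T then cc (inv_into T pp x) else sg x)"

lemma ii_bb[simp]: "T \<subseteq> MS \<Longrightarrow> j \<in> T \<Longrightarrow> inv_into T bb (bb j) = j"
  by (meson inj_bb inj_on_subset inv_into_f_f)
lemma ii_aa[simp]: "T \<subseteq> MS \<Longrightarrow> j \<in> T \<Longrightarrow> inv_into T aa (aa j) = j"
  by (meson inj_aa inj_on_subset inv_into_f_f)
lemma ii_pp[simp]: "T \<subseteq> MS \<Longrightarrow> j \<in> T \<Longrightarrow> inv_into T pp (pp j) = j"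
  by (meson inj_pp inj_on_subset inv_into_f_f)
lemma mem_bb: "T \<subseteq> MS \<Longrightarrow> j \<in> MS \<Longrightarrow> bb j \<in> bb ` T \<longleftrightarrow> j \<in> T"
  by (meson inj_bb inj_on_image_mem_iff)
lemma mem_aa: "T \<subseteq> MS \<Longrightarrow> j \<in> MS \<Longrightarrow> aa j \<in> aa ` T \<longleftrightarrow> j \<in> T"
  by (meson inj_aa inj_on_image_mem_iff)
lemma mem_pp: "T \<subseteq> MS \<Longrightarrow> j \<in> MS \<Longrightarrow> pp j \<in> pp ` T \<longleftrightarrow> j \<in> T"
  by (meson inj_pp inj_on_image_mem_iff)
lemma Hp_not_bb: "T \<subseteq> MS \<Longrightarrow> x \<in> Hp \<Longrightarrow> x \<notin> bb ` T" using bb_Hp by blast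
lemma Hp_not_pp: "T \<subseteq> MS \<Longrightarrow> x \<in> Hp \<Longrightarrow> x \<notin> pp ` T" using pp_Hp by blast
lemma nHp_not_aa: "T \<subseteq> MS \<Longrightarrow> x \<notin> Hp \<Longrightarrow> x \<notin> aa ` T" using aa_Hp by blast

lemma sT_b: "T \<subseteq> MS \<Longrightarrow> j \<in> T \<Longrightarrow> sT T (bb j) = fst j"
  by (simp add: sT_def)
lemma sT_a: "T \<subseteq> MS \<Longrightarrow> j \<in> T \<Longrightarrow> sT T (aa j) = gT T (bb j)"
  using Hp_not_bb[of T "aa j"] aa_Hp[of j] by (auto simp: sT_def)
lemma sT_p: "T \<subseteq> MS \<Longrightarrow> j \<in> T \<Longrightarrow> pp j \<notin> bb ` T \<Longrightarrow> sT T (pp j) = cc j"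
  using nHp_not_aa[of T "pp j"] pp_Hp[of j] by (auto simp: sT_def)
lemma sT_o: "x \<notin> bb ` T \<Longrightarrow> x \<notin> aa ` T \<Longrightarrow> x \<notin> pp ` T \<Longrightarrow> sT T x = sg x"
  by (simp add: sT_def)
lemma sT_g: "x \<notin> bb ` T \<Longrightarrow> x \<notin> aa ` T \<Longrightarrow> sT T x = gT T x"
  by (simp add: sT_def gT_def)
lemma gT_p: "T \<subseteq> MS \<Longrightarrow> j \<in> T \<Longrightarrow> gT T (pp j) = cc j"
  by (simp add: gT_def)
lemma gT_o: "y \<notin> pp ` T \<Longrightarrow> gT T y = sg y"
  by (simp add: gT_def)

lemma gT_ins: "T \<subseteq> MS \<Longrightarrow> k \<in> MS \<Longrightarrow> y \<noteq> pp k \<Longrightarrow> gT (insert k T) y = gT T y"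
proof -
  assume T: "T \<subseteq> MS" and k: "k \<in> MS" and y: "y \<noteq> pp k"
  show ?thesis
  proof (cases "y \<in> pp ` T")
    case True
    then obtain j where j: "j \<in> T" "y = pp j" by blast
    then show ?thesis using T k by (simp add: gT_p)
  next
    case False
    then show ?thesis using y by (simp add: gT_o)
  qed
qed

lemma gT_cases: "T \<subseteq> MS \<Longrightarrow> (\<exists>j\<in>T. y = pp j \<and> gT T y = cc j) \<or> (y \<notin> pp ` T \<and> gT T y = sg y)"
  by (auto simp: gT_def)

lemma sT_iter:
  assumes T: "T \<subseteq> MS" and k: "k \<in> MS" "k \<notin> T" and i: "i \<le> Suc (snd k)"
  shows "(sT T ^^ i) (fst k) = (sg ^^ i) (fst k)"
  using i
proof (induction i)
  case 0 then show ?case by simp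
next
  case (Suc i)
  have "i \<le> snd k" using Suc by simp
  hence x: "(sg ^^ i) (fst k) \<in> Hp" using MS_run k by blast
  have "(sg ^^ i) (fst k) \<notin> aa ` T"
  proof
    assume "(sg ^^ i) (fst k) \<in> aa ` T"
    then obtain j where "j \<in> T" "(sg ^^ i) (fst k) = aa j" by blast
    then show False using run_aa[of k j i] T k \<open>i \<le> snd k\<close> by auto
  qed
  hence "sT T ((sg ^^ i) (fst k)) = sg ((sg ^^ i) (fst k))"
    using x T by (intro sT_o) (auto dest: Hp_not_bb Hp_not_pp)
  then show ?case using Suc by simp
qed


lemma ms_simps:
  assumes "k \<in> MS"
  shows "aa k \<noteq> bb k" "aa k \<noteq> pp k" "aa k \<noteq> cc k" "fst k \<noteq> cc k" "fst k \<noteq> bb k" "fst k \<noteq> pp k"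
  using assms aa_Hp[of k] bb_Hp[of k] pp_Hp[of k] cc_Hp[of k] MS_fst[of k] by auto

lemma sg_eq_fst: "sg y = fst k \<Longrightarrow> y = pp k"
  unfolding pp_def by (drule arg_cong[where f="inv sg"]) simp
lemma sg_eq_cc: "sg y = cc k \<Longrightarrow> y = aa k"
  using injD[OF inj_sg, of y "aa k"] by simp
lemma cc_neq: "j \<in> MS \<Longrightarrow> k \<in> MS \<Longrightarrow> j \<noteq> k \<Longrightarrow> cc j \<noteq> cc k"
  using inj_onD[OF inj_cc] by blast
lemma fst_neq: "j \<in> MS \<Longrightarrow> k \<in> MS \<Longrightarrow> j \<noteq> k \<Longrightarrow> fst j \<noteq> fst k"
  using inj_onD[OF inj_fst] by blast
lemma cc_fst: "j \<in> MS \<Longrightarrow> k \<in> MS \<Longrightarrow> cc j \<noteq> fst k"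
  using cc_Hp MS_fst by metis

lemma sT_step_pt:
  assumes T: "T \<subseteq> MS" and k: "k \<in> MS" "k \<notin> T"
  shows "transpose (fst k) (cc k) (sT T (transpose (aa k) (bb k) x)) = sT (insert k T) x"
proof -
  have T': "insert k T \<subseteq> MS" using T k by auto
  note simps = ms_simps[OF k(1)]
  have bbk_nb: "bb k \<notin> bb ` T" using mem_bb[OF T k(1)] k by simp
  have bbk_na: "bb k \<notin> aa ` T" using nHp_not_aa[OF T bb_Hp[OF k(1)]] .
  have aak: "sT T (aa k) = cc k"
    using T k mem_aa[OF T k(1)] Hp_not_bb[OF T aa_Hp[OF k(1)]] Hp_not_pp[OF T aa_Hp[OF k(1)]]
    by (simp add: sT_o)
  have gfix: "transpose (fst k) (cc k) (gT T y) = gT (insert k T) y" if y: "y \<notin> Hp" for y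
  proof (cases "y = pp k")
    case True
    have "y \<notin> pp ` T" using True mem_pp[OF T k(1)] k by simp
    hence "gT T y = fst k" using True by (simp add: gT_o)
    moreover have "gT (insert k T) y = cc k" using True T' by (simp add: gT_p)
    ultimately show ?thesis by simp
  next
    case False
    have "gT T y \<noteq> fst k \<and> gT T y \<noteq> cc k"
    proof (cases "y \<in> pp ` T")
      case True
      then obtain j where j: "j \<in> T" "y = pp j" by blast
      hence "gT T y = cc j" using T by (simp add: gT_p)
      moreover have "cc j \<noteq> cc k" using cc_neq j k T by blast
      moreover have "cc j \<noteq> fst k" using cc_fst j k T by blast
      ultimately show ?thesis by simp
    next
      case f2: False
      hence "gT T y = sg y" by (simp add: gT_o)
      moreover have "sg y \<noteq> fst k" using False sg_eq_fst by blast
      moreover have "sg y \<noteq> cc k" using y aa_Hp[OF k(1)] sg_eq_cc by blast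
      ultimately show ?thesis by simp
    qed
    then show ?thesis using gT_ins[OF T k(1) False] by simp
  qed
  consider "x = aa k" | "x = bb k" | "x \<noteq> aa k" "x \<noteq> bb k" by blast
  then show ?thesis
  proof cases
    case 1
    have "sT T (bb k) = gT T (bb k)" using bbk_nb bbk_na by (rule sT_g)
    moreover have "sT (insert k T) (aa k) = gT (insert k T) (bb k)" using T' by (simp add: sT_a)
    ultimately show ?thesis using 1 simps gfix[OF bb_Hp[OF k(1)]] by simp
  next
    case 2
    have "sT (insert k T) (bb k) = fst k" using T' by (simp add: sT_b)
    then show ?thesis using 2 simps aak by simp
  next
    case 3
    hence tx: "transpose (aa k) (bb k) x = x" by simp
    show ?thesis
    proof (cases "x \<in> bb ` T")
      case True
      then obtain j where j: "j \<in> T" "x = bb j" by blast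
      have "fst j \<noteq> fst k" using fst_neq j k T by blast
      moreover have "fst j \<noteq> cc k" using cc_fst[of k j] j k T by auto
      ultimately show ?thesis using tx j T T' by (simp add: sT_b)
    next
      case nb: False
      show ?thesis
      proof (cases "x \<in> aa ` T")
        case True
        then obtain j where j: "j \<in> T" "x = aa j" by blast
        show ?thesis using tx j T T' gfix[OF bb_Hp, of j] by (auto simp: sT_a)
      next
        case na: False
        have na': "x \<notin> aa ` insert k T" using na 3 by auto
        have nb': "x \<notin> bb ` insert k T" using nb 3 by auto
        show ?thesis
        proof (cases "x \<in> pp ` T")
          case True
          then obtain j where j: "j \<in> T" "x = pp j" by blast
          have "cc j \<noteq> cc k" using cc_neq j k T by blast
          moreover have "cc j \<noteq> fst k" using cc_fst j k T by blast
          moreover have "sT T x = cc j" using j T nb by (simp add: sT_p)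
          moreover have "sT (insert k T) x = cc j" using j T' nb' by (simp add: sT_p)
          ultimately show ?thesis using tx by simp
        next
          case np: False
          have sx: "sT T x = sg x" using nb na np by (rule sT_o)
          show ?thesis
          proof (cases "x = pp k")
            case True
            have "sT (insert k T) x = cc k" using True T' nb' by (simp add: sT_p)
            then show ?thesis using tx sx True by simp
          next
            case False
            have np': "x \<notin> pp ` insert k T" using np False by auto
            have "sg x \<noteq> fst k" using False sg_eq_fst by blast
            moreover have "sg x \<noteq> cc k" using 3 sg_eq_cc by blast
            moreover have "sT (insert k T) x = sg x" using nb' na' np' by (rule sT_o)
            ultimately show ?thesis using tx sx by simp
          qed
        qed
      qed
    qed
  qed
qed

lemma iter_ak:
  assumes T: "T \<subseteq> MS" and k: "k \<in> MS" "k \<notin> T"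
  shows "(sT T ^^ snd k) (fst k) = aa k" "(sT T ^^ Suc (snd k)) (fst k) = cc k"
  using sT_iter[OF assms, of "snd k"] sT_iter[OF assms, of "Suc (snd k)"] by (simp_all add: aa_def cc_def)

lemma sT_step:
  assumes T: "T \<subseteq> MS" and k: "k \<in> MS" "k \<notin> T"
  shows "move_sigma io (sT T) (fst k) (snd k) = sT (insert k T)"
  unfolding move_sigma_def iter_ak[OF assms] bb_def[symmetric]
  using sT_step_pt[OF assms] by (auto simp: fun_eq_iff)

lemma sT_empty: "sT {} = sg" by (simp add: fun_eq_iff sT_def)

lemma bij_sT: "T \<subseteq> MS \<Longrightarrow> bij (sT T)"
proof -
  assume T: "T \<subseteq> MS"
  have "finite T" using T fin_MS finite_subset by blast
  then show ?thesis using T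
  proof (induction T rule: finite_induct)
    case empty then show ?case using bij_sg by (simp add: sT_empty)
  next
    case (insert k T)
    have "sT (insert k T) = move_sigma io (sT T) (fst k) (snd k)"
      using insert by (simp add: sT_step)
    moreover have "bij (move_sigma io (sT T) (fst k) (snd k))"
      unfolding move_sigma_def using insert by (intro bij_comp) simp_all
    ultimately show ?case by metis
  qed
qed


definition mT where "mT m T x = (if \<exists>j\<in>T. x \<in> run j then m (bb (SOME j. j \<in> T \<and> x \<in> run j)) else m x)"

lemma mT_in: "T \<subseteq> MS \<Longrightarrow> j \<in> T \<Longrightarrow> x \<in> run j \<Longrightarrow> mT m T x = m (bb j)"
  unfolding mT_def
  by (rule someI2[of "\<lambda>j'. j' \<in> T \<and> x \<in> run j'" j]) (auto dest: run_disj)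

lemma mT_out: "\<forall>j\<in>T. x \<notin> run j \<Longrightarrow> mT m T x = m x"
  unfolding mT_def by auto

lemma mT_step:
  assumes T: "T \<subseteq> MS" and k: "k \<in> MS" "k \<notin> T"
  shows "move_m io (sT T) (mT m T) (fst k) (snd k) = mT m (insert k T)"
proof (rule ext)
  fix x
  have T': "insert k T \<subseteq> MS" using T k by auto
  have it: "(\<exists>i\<le>snd k. x = (sT T ^^ i) (fst k)) \<longleftrightarrow> x \<in> run k"
    using sT_iter[OF T k] by (auto simp: run_def)
  have bbk: "mT m T (bb k) = m (bb k)"
    by (rule mT_out) (use T bb_Hp[OF k(1)] run_Hp in blast)
  show "move_m io (sT T) (mT m T) (fst k) (snd k) x = mT m (insert k T) x"
  proof (cases "x \<in> run k")
    case True
    have "mT m (insert k T) x = m (bb k)" using mT_in[OF T', of k x] True by simp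
    then show ?thesis unfolding move_m_def using it iter_ak[OF T k] bbk True
      by (simp add: bb_def[symmetric])
  next
    case False
    have "mT m T x = mT m (insert k T) x"
    proof (cases "\<exists>j\<in>T. x \<in> run j")
      case True
      then obtain j where "j \<in> T" "x \<in> run j" by blast
      then show ?thesis using mT_in[OF T, of j x m] mT_in[OF T', of j x m] by simp
    next
      case f2: False
      then show ?thesis using False by (simp add: mT_out)
    qed
    then show ?thesis unfolding move_m_def using it False by auto
  qed
qed

lemma mT_empty: "mT m {} = m" by (simp add: fun_eq_iff mT_def)

lemma fold_move:
  "distinct L \<Longrightarrow> set L \<subseteq> MS \<Longrightarrow> T \<subseteq> MS \<Longrightarrow> set L \<inter> T = {} \<Longrightarrow>
   fold (move io) L (sT T, mT m T) = (sT (T \<union> set L), mT m (T \<union> set L))"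
proof (induction L arbitrary: T)
  case Nil then show ?case by simp
next
  case (Cons k L)
  have k: "k \<in> MS" "k \<notin> T" using Cons.prems by auto
  have "move io k (sT T, mT m T) = (sT (insert k T), mT m (insert k T))"
    using sT_step[OF Cons.prems(3) k] mT_step[OF Cons.prems(3) k]
    by (cases k) (simp add: move_def)
  moreover have "fold (move io) L (sT (insert k T), mT m (insert k T)) =
     (sT (insert k T \<union> set L), mT m (insert k T \<union> set L))"
    using Cons by (intro Cons.IH) auto
  ultimately show ?case by simp
qed

lemma kauer_eq: "kauer_move Hp io sg m = (sT MS, mT m MS)"
proof -
  define L where "L = (SOME L. distinct L \<and> set L = MS)"
  have "\<exists>L. distinct L \<and> set L = MS" using finite_distinct_list[OF fin_MS] by blast
  hence L: "distinct L \<and> set L = MS" unfolding L_def by (rule someI_ex)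
  have "kauer_move Hp io sg m = fold (move io) L (sg, m)"
    unfolding kauer_move_def L_def Let_def by simp
  also have "\<dots> = fold (move io) L (sT {}, mT m {})" by (simp add: sT_empty mT_empty)
  also have "\<dots> = (sT MS, mT m MS)" using fold_move[of L "{}"] L by simp
  finally show ?thesis .
qed


definition Sk :: "('a \<Rightarrow> bit) \<Rightarrow> 'a \<times> nat \<Rightarrow> bit" where
  "Sk d k = (\<Sum>i\<le>snd k. d ((sg^^i) (fst k)))"
definition eps :: "'a set \<Rightarrow> 'a \<times> nat \<Rightarrow> bit" where
  "eps H k = (if cc k \<in> H_times H io then 1 else 0)"
definition wT where "wT d T y = (if y \<in> pp ` T then d y + Sk d (inv_into T pp y) else d y)"
definition dT where "dT H d T x = (if x \<in> bb ` T then Sk d (inv_into T bb x) + eps H (inv_into T bb x)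
  else if x \<in> aa ` T then d (aa (inv_into T aa x)) + eps H (inv_into T aa x) + wT d T (bb (inv_into T aa x))
  else if x \<in> pp ` T then d (pp (inv_into T pp x)) + Sk d (inv_into T pp x)
  else d x)"

lemma dT_b: "T \<subseteq> MS \<Longrightarrow> j \<in> T \<Longrightarrow> dT H d T (bb j) = Sk d j + eps H j"
  by (simp add: dT_def)
lemma dT_a: "T \<subseteq> MS \<Longrightarrow> j \<in> T \<Longrightarrow> dT H d T (aa j) = d (aa j) + eps H j + wT d T (bb j)"
  using Hp_not_bb[of T "aa j"] aa_Hp[of j] by (auto simp: dT_def)
lemma dT_p: "T \<subseteq> MS \<Longrightarrow> j \<in> T \<Longrightarrow> pp j \<notin> bb ` T \<Longrightarrow> dT H d T (pp j) = d (pp j) + Sk d j"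
  using nHp_not_aa[of T "pp j"] pp_Hp[of j] by (auto simp: dT_def)
lemma dT_o: "x \<notin> bb ` T \<Longrightarrow> x \<notin> aa ` T \<Longrightarrow> x \<notin> pp ` T \<Longrightarrow> dT H d T x = d x"
  by (simp add: dT_def)
lemma dT_w: "x \<notin> bb ` T \<Longrightarrow> x \<notin> aa ` T \<Longrightarrow> dT H d T x = wT d T x"
  by (simp add: dT_def wT_def f_inv_into_f)
lemma wT_p: "T \<subseteq> MS \<Longrightarrow> j \<in> T \<Longrightarrow> wT d T (pp j) = d (pp j) + Sk d j"
  by (simp add: wT_def)
lemma wT_o: "y \<notin> pp ` T \<Longrightarrow> wT d T y = d y"
  by (simp add: wT_def)
lemma wT_ins: "T \<subseteq> MS \<Longrightarrow> k \<in> MS \<Longrightarrow> y \<noteq> pp k \<Longrightarrow> wT d (insert k T) y = wT d T y"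
proof -
  assume T: "T \<subseteq> MS" and k: "k \<in> MS" and y: "y \<noteq> pp k"
  show ?thesis
  proof (cases "y \<in> pp ` T")
    case True
    then obtain j where j: "j \<in> T" "y = pp j" by blast
    then show ?thesis using T k by (simp add: wT_p)
  next
    case False
    then show ?thesis using y by (simp add: wT_o)
  qed
qed

lemma inv_sT:
  assumes T: "T \<subseteq> MS" and k: "k \<in> MS" "k \<notin> T"
  shows "inv (sT T) (fst k) = (if pp k \<in> bb ` T then aa (inv_into T bb (pp k)) else pp k)"
proof -
  have inj: "inj (sT T)" using bij_sT[OF T] bij_is_inj by blast
  have ppT: "pp k \<notin> pp ` T" using mem_pp[OF T k(1)] k by simp
  show ?thesis
  proof (cases "pp k \<in> bb ` T")
    case True
    then obtain j where j: "j \<in> T" "pp k = bb j" by blast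
    have "sT T (aa j) = gT T (bb j)" using T j by (simp add: sT_a)
    also have "\<dots> = fst k" using j ppT by (simp add: gT_o j(2)[symmetric])
    finally have "inv (sT T) (fst k) = aa j" by (rule inv_f_eq[OF inj])
    then show ?thesis using True j T by simp
  next
    case False
    have "sT T (pp k) = fst k" using False ppT nHp_not_aa[OF T pp_Hp[OF k(1)]] by (simp add: sT_o)
    then have "inv (sT T) (fst k) = pp k" by (rule inv_f_eq[OF inj])
    then show ?thesis using False by simp
  qed
qed

lemma dT_run:
  assumes T: "T \<subseteq> MS" and k: "k \<in> MS" "k \<notin> T" and i: "i \<le> snd k"
  shows "dT H d T ((sg^^i) (fst k)) = d ((sg^^i) (fst k))"
proof -
  have x: "(sg ^^ i) (fst k) \<in> Hp" using MS_run k i by blast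
  have "(sg ^^ i) (fst k) \<notin> aa ` T"
  proof
    assume "(sg ^^ i) (fst k) \<in> aa ` T"
    then obtain j where "j \<in> T" "(sg ^^ i) (fst k) = aa j" by blast
    then show False using run_aa[of k j i] T k i by auto
  qed
  then show ?thesis using x T by (intro dT_o) (auto dest: Hp_not_bb Hp_not_pp)
qed

lemma dT_same:
  assumes T: "T \<subseteq> MS" and k: "k \<in> MS" "k \<notin> T"
    and x: "x \<noteq> bb k" "x \<noteq> aa k" "x = pp k \<Longrightarrow> x \<in> bb ` T" "\<And>j. j \<in> T \<Longrightarrow> x = aa j \<Longrightarrow> bb j \<noteq> pp k"
  shows "dT H d (insert k T) x = dT H d T x"
proof -
  have T': "insert k T \<subseteq> MS" using T k by auto
  show ?thesis
  proof (cases "x \<in> bb ` T")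
    case True
    then obtain j where j: "j \<in> T" "x = bb j" by blast
    then show ?thesis using dT_b[OF T j(1)] dT_b[OF T', of j] by simp
  next
    case nb: False
    have nb': "x \<notin> bb ` insert k T" using nb x by auto
    show ?thesis
    proof (cases "x \<in> aa ` T")
      case True
      then obtain j where j: "j \<in> T" "x = aa j" by blast
      then show ?thesis using dT_a[OF T j(1)] dT_a[OF T', of j] wT_ins[OF T k(1), of "bb j"] x(4)[OF j]
        by simp
    next
      case na: False
      have na': "x \<notin> aa ` insert k T" using na x by auto
      show ?thesis
      proof (cases "x \<in> pp ` T")
        case True
        then obtain j where j: "j \<in> T" "x = pp j" by blast
        then show ?thesis using dT_p[OF T j(1)] dT_p[OF T', of j] nb nb' by simp
      next
        case np: False
        have np': "x \<notin> pp ` insert k T" using np x nb by auto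
        show ?thesis using dT_o[OF nb na np] dT_o[OF nb' na' np'] by simp
      qed
    qed
  qed
qed


lemma dT_step:
  assumes T: "T \<subseteq> MS" and k: "k \<in> MS" "k \<notin> T"
  shows "move_d H io (sT T) (dT H d T) (fst k) (snd k) = dT H d (insert k T)"
proof -
  have T': "insert k T \<subseteq> MS" using T k by auto
  define P where "P = inv (sT T) (fst k)"
  have S: "(\<Sum>i\<le>snd k. dT H d T ((sT T ^^ i) (fst k))) = Sk d k"
    unfolding Sk_def by (rule sum.cong) (simp_all add: sT_iter[OF T k] dT_run[OF T k])
  have LHS: "move_d H io (sT T) (dT H d T) (fst k) (snd k) = (\<lambda>x. if x = bb k then Sk d k + eps H k
     else if x = aa k then (if bb k \<noteq> P then dT H d T (bb k) + dT H d T (aa k) + eps H k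
                            else (dT H d T P + Sk d k) + dT H d T (aa k) + eps H k)
     else if x = P then (if bb k \<noteq> P then dT H d T P + Sk d k else Sk d k + eps H k)
     else dT H d T x)"
    unfolding move_d_def Let_def iter_ak[OF T k] S P_def[symmetric] bb_def[symmetric] eps_def[symmetric]
    by (simp add: fun_eq_iff)
  note simps = ms_simps[OF k(1)]
  have aakT: "aa k \<notin> aa ` T" using mem_aa[OF T k(1)] k by simp
  have dTaak: "dT H d T (aa k) = d (aa k)"
    using aakT Hp_not_bb[OF T aa_Hp[OF k(1)]] Hp_not_pp[OF T aa_Hp[OF k(1)]] by (simp add: dT_o)
  have bbkT: "bb k \<notin> bb ` T" using mem_bb[OF T k(1)] k by simp
  have bbka: "bb k \<notin> aa ` T" using nHp_not_aa[OF T bb_Hp[OF k(1)]] .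
  have ppkT: "pp k \<notin> pp ` T" using mem_pp[OF T k(1)] k by simp
  have ppka: "pp k \<notin> aa ` T" using nHp_not_aa[OF T pp_Hp[OF k(1)]] .
  have dTbbk: "dT H d T (bb k) = wT d T (bb k)" using bbkT bbka by (rule dT_w)
  have R_b: "dT H d (insert k T) (bb k) = Sk d k + eps H k" using dT_b[OF T', of k] by simp
  have R_a: "dT H d (insert k T) (aa k) = d (aa k) + eps H k + wT d (insert k T) (bb k)"
    using dT_a[OF T', of k] by simp
  show ?thesis
  proof (rule ext)
    fix x
    show "move_d H io (sT T) (dT H d T) (fst k) (snd k) x = dT H d (insert k T) x"
    proof (cases "pp k \<in> bb ` T")
      case False
      have P: "P = pp k" using inv_sT[OF T k] False P_def by simp
      consider "x = bb k" | "x \<noteq> bb k" "x = aa k" | "x \<noteq> bb k" "x \<noteq> aa k" "x = pp k"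
        | "x \<noteq> bb k" "x \<noteq> aa k" "x \<noteq> pp k" by blast
      then show ?thesis
      proof cases
        case 1 then show ?thesis using LHS R_b by simp
      next
        case 2
        show ?thesis
        proof (cases "bb k = pp k")
          case True
          have "dT H d T (pp k) = d (pp k)" using False ppka ppkT by (simp add: dT_o)
          moreover have "wT d (insert k T) (bb k) = d (pp k) + Sk d k"
            using True wT_p[OF T', of k] by simp
          ultimately have A: "dT H d (insert k T) x = d (aa k) + eps H k + (d (pp k) + Sk d k)"
            using R_a 2 by simp
          have B: "move_d H io (sT T) (dT H d T) (fst k) (snd k) x = (d (pp k) + Sk d k) + d (aa k) + eps H k"
            using LHS 2 P True dTaak simps \<open>dT H d T (pp k) = d (pp k)\<close> by simp
          show ?thesis by (simp only: A B ac_simps)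
        next
          case f: False
          have "wT d (insert k T) (bb k) = wT d T (bb k)" using wT_ins[OF T k(1) f] .
          then have A: "dT H d (insert k T) x = d (aa k) + eps H k + wT d T (bb k)" using R_a 2 by simp
          have B: "move_d H io (sT T) (dT H d T) (fst k) (snd k) x = wT d T (bb k) + d (aa k) + eps H k"
            using LHS 2 P f dTaak dTbbk simps by simp
          show ?thesis by (simp only: A B ac_simps)
        qed
      next
        case 3
        have "dT H d T (pp k) = d (pp k)" using False ppka ppkT by (simp add: dT_o)
        moreover have "dT H d (insert k T) (pp k) = d (pp k) + Sk d k"
          using dT_p[OF T', of k] False 3 by auto
        ultimately show ?thesis using LHS 3 P by simp
      next
        case 4
        have "dT H d (insert k T) x = dT H d T x"
        proof (rule dT_same[OF T k])
          show "\<And>j. j \<in> T \<Longrightarrow> x = aa j \<Longrightarrow> bb j \<noteq> pp k" using False by (metis image_eqI)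
        qed (use 4 in auto)
        then show ?thesis using LHS 4 P by simp
      qed
    next
      case True
      then obtain j0 where j0: "j0 \<in> T" "pp k = bb j0" by blast
      have P: "P = aa j0" using inv_sT[OF T k] True P_def j0 T by simp
      have bbP: "bb k \<noteq> P" using P bb_Hp[OF k(1)] aa_Hp[of j0] j0 T by auto
      have bbpp: "bb k \<noteq> pp k" using j0 bbkT by auto
      have aaj0: "aa j0 \<noteq> aa k" using aakT j0 by (metis image_eqI)
      have bbj0: "aa j0 \<noteq> bb k" using bbP P by simp
      consider "x = bb k" | "x = aa k" | "x = aa j0" | "x \<noteq> bb k" "x \<noteq> aa k" "x \<noteq> aa j0" by blast
      then show ?thesis
      proof cases
        case 1 then show ?thesis using LHS R_b by simp
      next
        case 2
        have "wT d (insert k T) (bb k) = wT d T (bb k)" using wT_ins[OF T k(1) bbpp] .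
        then have A: "dT H d (insert k T) x = d (aa k) + eps H k + wT d T (bb k)" using R_a 2 by simp
        have B: "move_d H io (sT T) (dT H d T) (fst k) (snd k) x = wT d T (bb k) + d (aa k) + eps H k"
          using LHS 2 bbP dTaak dTbbk simps by simp
        show ?thesis by (simp only: A B ac_simps)
      next
        case 3
        have "dT H d T (aa j0) = d (aa j0) + eps H j0 + wT d T (bb j0)" using dT_a[OF T j0(1)] .
        moreover have "wT d T (bb j0) = d (pp k)" using j0 ppkT by (simp add: wT_o)
        moreover have "dT H d (insert k T) (aa j0) = d (aa j0) + eps H j0 + wT d (insert k T) (bb j0)"
          using dT_a[OF T', of j0] j0 by simp
        moreover have "wT d (insert k T) (bb j0) = d (pp k) + Sk d k"
          using wT_p[OF T', of k] j0 by simp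
        ultimately have A: "dT H d (insert k T) x = d (aa j0) + eps H j0 + (d (pp k) + Sk d k)"
          and B: "move_d H io (sT T) (dT H d T) (fst k) (snd k) x = d (aa j0) + eps H j0 + d (pp k) + Sk d k"
          using LHS 3 bbP P aaj0 bbj0 by simp_all
        show ?thesis by (simp only: A B ac_simps)
      next
        case 4
        have "dT H d (insert k T) x = dT H d T x"
        proof (rule dT_same[OF T k])
          show "x = pp k \<Longrightarrow> x \<in> bb ` T" using True by simp
          fix j assume j: "j \<in> T" "x = aa j"
          show "bb j \<noteq> pp k"
          proof
            assume "bb j = pp k"
            hence "bb j = bb j0" using j0 by simp
            hence "j = j0" using inj_onD[OF inj_bb, of j j0] j j0 T by blast
            thus False using j 4 by simp
          qed
        qed (use 4 in auto)
        then show ?thesis using LHS 4 P by simp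
      qed
    qed
  qed
qed

lemma dT_empty: "dT H d {} = d" by (simp add: fun_eq_iff dT_def)

lemma fold_gmove:
  "distinct L \<Longrightarrow> set L \<subseteq> MS \<Longrightarrow> T \<subseteq> MS \<Longrightarrow> set L \<inter> T = {} \<Longrightarrow>
   fold (graded_move H io) L (sT T, mT m T, dT H d T) = (sT (T \<union> set L), mT m (T \<union> set L), dT H d (T \<union> set L))"
proof (induction L arbitrary: T)
  case Nil then show ?case by simp
next
  case (Cons k L)
  have k: "k \<in> MS" "k \<notin> T" using Cons.prems by auto
  have "graded_move H io k (sT T, mT m T, dT H d T) = (sT (insert k T), mT m (insert k T), dT H d (insert k T))"
    using sT_step[OF Cons.prems(3) k] mT_step[OF Cons.prems(3) k] dT_step[OF Cons.prems(3) k]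
    by (cases k) (simp add: graded_move_def)
  moreover have "fold (graded_move H io) L (sT (insert k T), mT m (insert k T), dT H d (insert k T)) =
     (sT (insert k T \<union> set L), mT m (insert k T \<union> set L), dT H d (insert k T \<union> set L))"
    using Cons by (intro Cons.IH) auto
  ultimately show ?case by simp
qed

lemma gkauer_eq: "graded_kauer_move H Hp io sg m d = (sT MS, mT m MS, dT H d MS)"
proof -
  define L where "L = (SOME L. distinct L \<and> set L = MS)"
  have "\<exists>L. distinct L \<and> set L = MS" using finite_distinct_list[OF fin_MS] by blast
  hence L: "distinct L \<and> set L = MS" unfolding L_def by (rule someI_ex)
  have "graded_kauer_move H Hp io sg m d = fold (graded_move H io) L (sg, m, d)"
    unfolding graded_kauer_move_def L_def Let_def by simp
  also have "\<dots> = fold (graded_move H io) L (sT {}, mT m {}, dT H d {})" by (simp add: sT_empty mT_empty dT_empty)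
  also have "\<dots> = (sT MS, mT m MS, dT H d MS)" using fold_gmove[of L "{}"] L by simp
  finally show ?thesis .
qed

end

lemma bit_cases: "(x::bit) = 0 \<or> x = 1" using bit_not_zero_iff by blast
lemma bit_c1: "(a::bit) + b + c + b + c = a"
proof -
  have "a + b + c + b + c = a + (b + b) + (c + c)" by (simp only: ac_simps)
  then show ?thesis by simp
qed
lemma bit_c2: "(a::bit) + b + b = a"
  by (simp only: add.assoc bit_add_self add_0_right)

lemma funpow_in: "sg permutes H \<Longrightarrow> h \<in> H \<Longrightarrow> (sg^^n) h \<in> H"
  by (induction n) (auto simp: permutes_in_image)

lemma cov_iter: 
  assumes ps: "sg permutes H" and h: "h \<in> H"
  shows "(cov_sigma H sg d ^^ n) (h, i) = ((sg^^n) h, i + (\<Sum>l<n. d ((sg^^l) h)))"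
proof (induction n)
  case 0 then show ?case by simp
next
  case (Suc n)
  have "(cov_sigma H sg d ^^ Suc n) (h, i) = cov_sigma H sg d ((sg^^n) h, i + (\<Sum>l<n. d ((sg^^l) h)))"
    using Suc by simp
  also have "\<dots> = ((sg^^Suc n) h, i + (\<Sum>l<n. d ((sg^^l) h)) + d ((sg^^n) h))"
    using funpow_in[OF ps h, of n] by (simp add: cov_sigma_def)
  also have "\<dots> = ((sg^^Suc n) h, i + (\<Sum>l<Suc n. d ((sg^^l) h)))"
    by (simp add: add.assoc)
  finally show ?case .
qed

lemma cov_inv: "sg permutes H \<Longrightarrow> inj (cov_sigma H sg d) \<Longrightarrow> h \<in> H \<Longrightarrow>
   inv (cov_sigma H sg d) (h, i) = (inv sg h, i + d (inv sg h))"
proof -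
  assume ps: "sg permutes H" and inj: "inj (cov_sigma H sg d)" and h: "h \<in> H"
  have ih: "inv sg h \<in> H" using h permutes_in_image[OF permutes_inv[OF ps]] by simp
  have e: "sg (inv sg h) = h" using permutes_inverses(1)[OF ps] .
  have "cov_sigma H sg d (inv sg h, i + d (inv sg h)) = (sg (inv sg h), i + d (inv sg h) + d (inv sg h))"
    using ih by (simp add: cov_sigma_def)
  also have "\<dots> = (h, i)" by (simp only: e bit_c2)
  finally have "cov_sigma H sg d (inv sg h, i + d (inv sg h)) = (h, i)" .
  then show ?thesis by (rule inv_f_eq[OF inj])
qed

lemma base_kset:
  assumes ps: "sg permutes H" and pi: "io permutes H" and fin: "finite H"
    and HpH: "Hp \<subseteq> H" and ioHp: "io ` Hp = Hp"
  shows "kset Hp io sg"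
proof
  show "bij sg" using ps permutes_bij by blast
  show inj: "inj io" using pi permutes_inj by blast
  show "finite Hp" using fin HpH finite_subset by blast
  fix x show "io x \<in> Hp \<longleftrightarrow> x \<in> Hp"
    using inj_image_mem_iff[OF inj, of x Hp] ioHp by simp
qed

lemma cov_kset:
  assumes ps: "sg permutes H" and pi: "io permutes H" and fin: "finite H"
    and HpH: "Hp \<subseteq> H" and ioHp: "io ` Hp = Hp"
  shows "kset (Hp \<times> UNIV) (cov_iota H io) (cov_sigma H sg d)"
proof
  interpret B: kset Hp io sg by (rule base_kset[OF assms])
  have injs: "inj sg" using ps permutes_inj by blast
  show "bij (cov_sigma H sg d)"
  proof (rule bijI)
    show "inj (cov_sigma H sg d)"
    proof (rule injI)
      fix x y assume e: "cov_sigma H sg d x = cov_sigma H sg d y"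
      obtain h i h' i' where xy: "x = (h, i)" "y = (h', i')" by fastforce
      have "sg h = sg h'" using e xy by (simp add: cov_sigma_def)
      hence hh: "h = h'" by (rule injD[OF injs])
      have s: "snd (cov_sigma H sg d (h, i)) = snd (cov_sigma H sg d (h, i'))" using e xy hh by simp
      have "i = i'"
      proof (cases "h \<in> H")
        case True
        then have "i + d h = i' + d h" using s by (simp add: cov_sigma_def)
        then show ?thesis by simp
      next
        case False
        then show ?thesis using s by (simp add: cov_sigma_def)
      qed
      thus "x = y" using xy hh by simp
    qed
    show "surj (cov_sigma H sg d)"
    proof (rule surjI[where f = "\<lambda>(h, j). (inv sg h, if inv sg h \<in> H then j + d (inv sg h) else j)"])
      fix y :: "'a \<times> bit"
      obtain h j where y: "y = (h, j)" by fastforce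
      have e: "sg (inv sg h) = h" using permutes_inverses(1)[OF ps] .
      show "cov_sigma H sg d ((\<lambda>(h, j). (inv sg h, if inv sg h \<in> H then j + d (inv sg h) else j)) y) = y"
      proof (cases "inv sg h \<in> H")
        case True
        then show ?thesis using y by (simp add: cov_sigma_def e bit_c2 del: add_bit_eq_xor)
      next
        case False
        then show ?thesis using y by (simp add: cov_sigma_def e)
      qed
    qed
  qed
  show "inj (cov_iota H io)"
  proof (rule injI)
    fix x y assume e: "cov_iota H io x = cov_iota H io y"
    obtain h i h' i' where xy: "x = (h, i)" "y = (h', i')" by fastforce
    have inj: "inj io" using pi permutes_inj by blast
    show "x = y"
    proof (cases "h \<in> H_times H io"; cases "h' \<in> H_times H io")
      assume "h \<in> H_times H io" "h' \<in> H_times H io"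
      then show ?thesis using e xy by (simp add: cov_iota_def)
    next
      assume a: "h \<in> H_times H io" "h' \<notin> H_times H io"
      hence "io h' = h" "io h = h" using e xy by (auto simp: cov_iota_def H_times_def)
      hence "h' = h" using injD[OF inj, of h' h] by simp
      then show ?thesis using a by simp
    next
      assume a: "h \<notin> H_times H io" "h' \<in> H_times H io"
      hence "io h = h'" "io h' = h'" using e xy by (auto simp: cov_iota_def H_times_def)
      hence "h' = h" using injD[OF inj, of h h'] by simp
      then show ?thesis using a by simp
    next
      assume a: "h \<notin> H_times H io" "h' \<notin> H_times H io"
      hence "io h = io h'" "i = i'" using e xy by (auto simp: cov_iota_def)
      then show ?thesis using xy injD[OF inj, of h h'] by simp
    qed
  qed
  have "finite (UNIV :: bit set)" unfolding bit_UNIV by simp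
  then show "finite (Hp \<times> (UNIV :: bit set))" using B.fin_Hp by (rule finite_cartesian_product[rotated])
  fix x :: "'a \<times> bit"
  obtain h i where x: "x = (h, i)" by fastforce
  show "cov_iota H io x \<in> Hp \<times> UNIV \<longleftrightarrow> x \<in> Hp \<times> UNIV"
    using x B.io_Hp by (auto simp: cov_iota_def)
qed


lemma cover_main:
  fixes H Hp :: "'h set" and io sg :: "'h \<Rightarrow> 'h" and m :: "'h \<Rightarrow> nat" and d :: "'h \<Rightarrow> bit"
  assumes ps: "sg permutes H" and pi: "io permutes H" and fin: "finite H"
    and HpH: "Hp \<subseteq> H" and ioHp: "io ` Hp = Hp"
  shows "case graded_kauer_move H Hp io sg m d of (\<sigma>1, m1, d1) \<Rightarrow>
           case kauer_move (Hp \<times> (UNIV :: bit set)) (cov_iota H io) (cov_sigma H sg d) (cov_m m)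
             of (\<sigma>2, m2) \<Rightarrow>
           (\<forall>x \<in> cov_H H. cov_sigma H \<sigma>1 d1 x = \<sigma>2 x \<and> cov_m m1 x = m2 x)"
proof -
  interpret B: kset Hp io sg by (rule base_kset[OF assms])
  interpret C: kset "Hp \<times> (UNIV::bit set)" "cov_iota H io" "cov_sigma H sg d" by (rule cov_kset[OF assms])
  have injc: "inj (cov_sigma H sg d)" by (rule C.inj_sg)
  have BH: "\<And>h r. (h, r) \<in> B.MS \<Longrightarrow> h \<in> H" using B.MS_fst HpH by fastforce
  have MSiff: "((h, j), r) \<in> C.MS \<longleftrightarrow> (h, r) \<in> B.MS" for h j r
  proof (cases "h \<in> H")
    case True
    show ?thesis unfolding C.MS_iff B.MS_iff fst_conv snd_conv cov_iter[OF ps True] cov_inv[OF ps injc True]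
      by simp
  next
    case False
    have "(h, r) \<notin> B.MS" using BH False by blast
    moreover have "((h, j), r) \<notin> C.MS" using C.MS_fst False HpH by fastforce
    ultimately show ?thesis by simp
  qed
  have Kform: "\<exists>h j r. K = ((h, j), r) \<and> (h, r) \<in> B.MS" if "K \<in> C.MS" for K
    using that MSiff by (metis prod.collapse)
  have pa: "C.aa ((h, j), r) = (B.aa (h, r), j + (\<Sum>l<r. d ((sg^^l) h)))" if "(h, r) \<in> B.MS" for h j r
    unfolding C.aa_def B.aa_def fst_conv snd_conv cov_iter[OF ps BH[OF that]] by simp
  have pc: "C.cc ((h, j), r) = (B.cc (h, r), j + B.Sk d (h, r))" if "(h, r) \<in> B.MS" for h j r
    unfolding C.cc_def B.cc_def B.Sk_def fst_conv snd_conv cov_iter[OF ps BH[OF that]]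
    by (simp only: lessThan_Suc_atMost)
  have pb: "C.bb ((h, j), r) = (B.bb (h, r), j + B.Sk d (h, r) + B.eps H (h, r))" if "(h, r) \<in> B.MS" for h j r
  proof (cases "B.cc (h, r) \<in> H_times H io")
    case True
    hence "io (B.cc (h, r)) = B.cc (h, r)" by (simp add: H_times_def)
    then show ?thesis unfolding C.bb_def B.bb_def B.eps_def pc[OF that] using True by (simp add: cov_iota_def)
  next
    case False
    then show ?thesis unfolding C.bb_def B.bb_def B.eps_def pc[OF that] by (simp add: cov_iota_def)
  qed
  have pp: "C.pp ((h, j), r) = (B.pp (h, r), j + d (B.pp (h, r)))" if "(h, r) \<in> B.MS" for h j r
    unfolding C.pp_def B.pp_def using cov_inv[OF ps injc BH[OF that]] by simp
  have prun: "x \<in> C.run ((h, j), r) \<longleftrightarrow> (\<exists>l\<le>r. x = ((sg^^l) h, j + (\<Sum>i<l. d ((sg^^i) h))))"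
    if "(h, r) \<in> B.MS" for h j r x
    unfolding C.run_def using cov_iter[OF ps BH[OF that]] by auto
  have nbb: "(y, i) \<notin> C.bb ` C.MS" if "y \<notin> B.bb ` B.MS" for y i
  proof
    assume "(y, i) \<in> C.bb ` C.MS"
    then obtain K where K: "K \<in> C.MS" "(y, i) = C.bb K" by blast
    then obtain h j r where "K = ((h, j), r)" "(h, r) \<in> B.MS" using Kform by blast
    then show False using K pb that by auto
  qed
  have naa: "(y, i) \<notin> C.aa ` C.MS" if "y \<notin> B.aa ` B.MS" for y i
  proof
    assume "(y, i) \<in> C.aa ` C.MS"
    then obtain K where K: "K \<in> C.MS" "(y, i) = C.aa K" by blast
    then obtain h j r where "K = ((h, j), r)" "(h, r) \<in> B.MS" using Kform by blast
    then show False using K pa that by auto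
  qed
  have npp: "(y, i) \<notin> C.pp ` C.MS" if "y \<notin> B.pp ` B.MS" for y i
  proof
    assume "(y, i) \<in> C.pp ` C.MS"
    then obtain K where K: "K \<in> C.MS" "(y, i) = C.pp K" by blast
    then obtain h j r where "K = ((h, j), r)" "(h, r) \<in> B.MS" using Kform by blast
    then show False using K pp that by auto
  qed
  have gk: "graded_kauer_move H Hp io sg m d = (B.sT B.MS, B.mT m B.MS, B.dT H d B.MS)"
    by (rule B.gkauer_eq)
  have kk: "kauer_move (Hp \<times> (UNIV :: bit set)) (cov_iota H io) (cov_sigma H sg d) (cov_m m)
      = (C.sT C.MS, C.mT (cov_m m) C.MS)" by (rule C.kauer_eq)
  have T: "B.MS \<subseteq> B.MS" and CT: "C.MS \<subseteq> C.MS" by simp_all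
  have main_s: "cov_sigma H (B.sT B.MS) (B.dT H d B.MS) (y, i) = C.sT C.MS (y, i)" if y: "y \<in> H" for y i
  proof -
    have L: "cov_sigma H (B.sT B.MS) (B.dT H d B.MS) (y, i) = (B.sT B.MS y, i + B.dT H d B.MS y)"
      using y by (simp add: cov_sigma_def)
    consider (b) "y \<in> B.bb ` B.MS" | (a) "y \<notin> B.bb ` B.MS" "y \<in> B.aa ` B.MS"
      | (p) "y \<notin> B.bb ` B.MS" "y \<notin> B.aa ` B.MS" "y \<in> B.pp ` B.MS"
      | (o) "y \<notin> B.bb ` B.MS" "y \<notin> B.aa ` B.MS" "y \<notin> B.pp ` B.MS" by blast
    then show ?thesis
    proof cases
      case b
      then obtain k where k: "k \<in> B.MS" "y = B.bb k" by blast
      obtain h r where kk: "k = (h, r)" by fastforce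
      define K where "K = ((h, i + B.Sk d k + B.eps H k), r)"
      have KC: "K \<in> C.MS" using MSiff k kk K_def by simp
      have "C.bb K = (y, i)" using pb[of h r] k kk K_def bit_c1 by simp
      hence "C.sT C.MS (y, i) = fst K" using C.sT_b[OF CT KC] by simp
      moreover have "B.sT B.MS y = h" using B.sT_b[OF T k(1)] k kk by simp
      moreover have "B.dT H d B.MS y = B.Sk d k + B.eps H k" using B.dT_b[OF T k(1)] k by simp
      ultimately show ?thesis using L K_def by (simp add: add.assoc)
    next
      case a
      then obtain k where k: "k \<in> B.MS" "y = B.aa k" by blast
      obtain h r where kk: "k = (h, r)" by fastforce
      define A where "A = (\<Sum>l<r. d ((sg^^l) h))"
      define K where "K = ((h, i + A), r)"
      define t where "t = i + A + B.Sk d k + B.eps H k"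
      have KC: "K \<in> C.MS" using MSiff k kk K_def by simp
      have "C.aa K = (y, i)" using pa[of h r] k kk K_def A_def bit_c2 by simp
      hence cs: "C.sT C.MS (y, i) = C.gT C.MS (C.bb K)" using C.sT_a[OF CT KC] by simp
      have cbb: "C.bb K = (B.bb k, t)" using pb[of h r] k kk K_def t_def by simp
      have SkA: "B.Sk d k = A + d (B.aa k)"
        unfolding B.Sk_def B.aa_def A_def kk by (simp add: lessThan_Suc_atMost[symmetric])
      have t: "t = i + d (B.aa k) + B.eps H k"
        unfolding t_def SkA by (simp only: add.assoc[symmetric] bit_c2)
      have bs: "B.sT B.MS y = B.gT B.MS (B.bb k)" using B.sT_a[OF T k(1)] k by simp
      have bd: "B.dT H d B.MS y = d (B.aa k) + B.eps H k + B.wT d B.MS (B.bb k)"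
        using B.dT_a[OF T k(1)] k by simp
      show ?thesis
      proof (cases "B.bb k \<in> B.pp ` B.MS")
        case True
        then obtain k' where k': "k' \<in> B.MS" "B.bb k = B.pp k'" by blast
        obtain h' r' where kk': "k' = (h', r')" by fastforce
        define K' where "K' = ((h', t + d (B.pp k')), r')"
        have KC': "K' \<in> C.MS" using MSiff k' kk' K'_def by simp
        have "C.pp K' = (B.pp k', t + d (B.pp k') + d (B.pp k'))" using pp[of h' r'] k' kk' K'_def by simp
        hence "C.pp K' = C.bb K" using cbb k' bit_c2 by simp
        hence "C.gT C.MS (C.bb K) = C.cc K'" using C.gT_p[OF CT KC'] by simp
        also have "\<dots> = (B.cc k', t + d (B.pp k') + B.Sk d k')" using pc[of h' r'] k' kk' K'_def by simp
        finally have R: "C.sT C.MS (y, i) = (B.cc k', t + d (B.pp k') + B.Sk d k')" using cs by simp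
        have "B.sT B.MS y = B.cc k'" using bs k' B.gT_p[OF T k'(1)] by simp
        moreover have "B.dT H d B.MS y = d (B.aa k) + B.eps H k + (d (B.pp k') + B.Sk d k')"
          using bd k' B.wT_p[OF T k'(1)] by simp
        ultimately show ?thesis using L R t by (simp only: ac_simps)
      next
        case False
        have np: "C.bb K \<notin> C.pp ` C.MS" using npp[OF False] cbb by simp
        have bH: "B.bb k \<in> H"
        proof -
          have hH: "h \<in> H" using BH k kk by simp
          have "B.cc k \<in> H" unfolding B.cc_def using funpow_in[OF ps hH, of "Suc r"] kk by simp
          then show ?thesis unfolding B.bb_def using permutes_in_image[OF pi] by simp
        qed
        have R: "C.sT C.MS (y, i) = (sg (B.bb k), t + d (B.bb k))"
          using cs C.gT_o[OF np] cbb bH by (simp add: cov_sigma_def)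
        have "B.sT B.MS y = sg (B.bb k)" using bs B.gT_o[OF False] by simp
        moreover have "B.dT H d B.MS y = d (B.aa k) + B.eps H k + d (B.bb k)"
          using bd B.wT_o[OF False] by simp
        ultimately show ?thesis using L R t by (simp only: ac_simps)
      qed
    next
      case p
      then obtain k where k: "k \<in> B.MS" "y = B.pp k" by blast
      obtain h r where kk: "k = (h, r)" by fastforce
      define K where "K = ((h, i + d (B.pp k)), r)"
      have KC: "K \<in> C.MS" using MSiff k kk K_def by simp
      have cp: "C.pp K = (y, i)" using pp[of h r] k kk K_def bit_c2 by simp
      have "C.pp K \<notin> C.bb ` C.MS" using nbb[OF p(1)] cp by simp
      hence "C.sT C.MS (y, i) = C.cc K" using C.sT_p[OF CT KC] cp by simp
      also have "\<dots> = (B.cc k, i + d (B.pp k) + B.Sk d k)" using pc[of h r] k kk K_def by simp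
      finally have R: "C.sT C.MS (y, i) = (B.cc k, i + d (B.pp k) + B.Sk d k)" .
      have "B.sT B.MS y = B.cc k" using B.sT_p[OF T k(1)] k p(1) by simp
      moreover have "B.dT H d B.MS y = d (B.pp k) + B.Sk d k" using B.dT_p[OF T k(1)] k p(1) by simp
      ultimately show ?thesis using L R by (simp add: add.assoc)
    next
      case o
      have "C.sT C.MS (y, i) = cov_sigma H sg d (y, i)" using C.sT_o[OF nbb[OF o(1)] naa[OF o(2)] npp[OF o(3)]] .
      moreover have "B.sT B.MS y = sg y" using B.sT_o[OF o] .
      moreover have "B.dT H d B.MS y = d y" using B.dT_o[OF o] .
      ultimately show ?thesis using L y by (simp add: cov_sigma_def)
    qed
  qed
  have main_m: "cov_m (B.mT m B.MS) (y, i) = C.mT (cov_m m) C.MS (y, i)" for y i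
  proof (cases "\<exists>k\<in>B.MS. y \<in> B.run k")
    case True
    then obtain k where k: "k \<in> B.MS" "y \<in> B.run k" by blast
    obtain h r where kk: "k = (h, r)" by fastforce
    obtain l where l: "l \<le> r" "y = (sg^^l) h" using k kk unfolding B.run_def by auto
    define K where "K = ((h, i + (\<Sum>i<l. d ((sg ^^ i) h))), r)"
    have KC: "K \<in> C.MS" using MSiff k kk K_def by simp
    have "(y, i) \<in> C.run K" unfolding K_def prun[OF k(1)[unfolded kk]] using l bit_c2 by auto
    hence "C.mT (cov_m m) C.MS (y, i) = cov_m m (C.bb K)" by (rule C.mT_in[OF CT KC])
    also have "\<dots> = m (B.bb k)" using pb[of h r] k kk K_def by (simp add: cov_m_def)
    finally show ?thesis using B.mT_in[OF T k] by (simp add: cov_m_def)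
  next
    case False
    have "\<forall>K\<in>C.MS. (y, i) \<notin> C.run K"
    proof (intro ballI notI)
      fix K assume K: "K \<in> C.MS" "(y, i) \<in> C.run K"
      then obtain h j r where kk: "K = ((h, j), r)" "(h, r) \<in> B.MS" using Kform by blast
      then obtain l where "l \<le> r" "y = (sg^^l) h" using K prun by auto
      hence "y \<in> B.run (h, r)" unfolding B.run_def by auto
      then show False using False kk by blast
    qed
    then have c: "C.mT (cov_m m) C.MS (y, i) = cov_m m (y, i)" by (rule C.mT_out)
    have b: "B.mT m B.MS y = m y" by (rule B.mT_out) (use False in blast)
    show ?thesis using b c by (simp add: cov_m_def)
  qed
  show ?thesis unfolding gk kk using main_s main_m by (auto simp: cov_H_def)
qed

theorem proposition3p18:
  fixes H H' :: "'h set" and \<iota> \<sigma> :: "'h \<Rightarrow> 'h" and m :: "'h \<Rightarrow> nat" and d :: "'h \<Rightarrow> bit"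
  assumes "graded_skew_brauer_graph H \<iota> \<sigma> m d"
    and "H' \<subseteq> H" and "\<iota> ` H' = H'"
  shows "case graded_kauer_move H H' \<iota> \<sigma> m d of (\<sigma>1, m1, d1) \<Rightarrow>
           case kauer_move (H' \<times> (UNIV :: bit set)) (cov_iota H \<iota>) (cov_sigma H \<sigma> d) (cov_m m)
             of (\<sigma>2, m2) \<Rightarrow>
           (\<forall>x \<in> cov_H H. cov_sigma H \<sigma>1 d1 x = \<sigma>2 x \<and> cov_m m1 x = m2 x)"
  proof -
  have sbg: "skew_brauer_graph H \<iota> \<sigma> m" using assms(1) by (simp add: graded_skew_brauer_graph_def)
  have fin: "finite H" and pi: "\<iota> permutes H" and ps: "\<sigma> permutes H"
    using sbg by (simp_all add: skew_brauer_graph_def)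
  show ?thesis by (rule cover_main[OF ps pi fin assms(2) assms(3)])
qed

end
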